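(* There is an absolute constant $c>0$ such that the following holds. Let $G$ be a finite simple graph with maximum degree $d\ge 1$, and let $D(G)$ be a straight-line drawing of $G$ in the base plane $\mathcal{P}_1=\{z=0\}\subset\mathbb{R}^3$ with arbitrary but distinct vertex positions (no assumption on the angular resolution of $D(G)$). Then there is a 3D arc diagram drawing of $G$ with base plane $\mathcal{P}_1$ and with the same vertex positions as $D(G)$ whose angular resolution is at least $c/d$.
   Context: A 3D arc diagram drawing of $G$ with base plane $\mathcal{P}_1=\{z=0\}$ is a placement of the vertices at distinct points of $\mathcal{P}_1$, together with, for each edge $e=(a,b)$, a circular arc (a contiguous subset of a circle; a straight segment is allowed as the degenerate case) with endpoints at the positions of $a$ and $b$, such that: the arc lies in the plane $\mathcal{P}_2$ containing the segment $ab$ and perpendicular to $\mathcal{P}_1$ (so the arc projects perpendicularly onto the segment $ab$ in $\mathcal{P}_1$); all arcs lie in the closed half-space $z\ge 0$; and the arc forms the same angle $\alpha_e\in[0,\pi/2]$ with the segment $ab$ at both of its endpoints. The angle between two arcs incident to a common vertex $v$ is the angle in $[0,\pi]$ between their tangent rays at $v$ (directed into the arcs). The angular resolution of the drawing is the minimum of this angle over all vertices $v$ and all pairs of distinct edges incident to $v$. *)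

theory Defs
  imports "HOL-Analysis.Analysis"
begin

type_synonym point3 = "real \<times> real \<times> real"

definition simple_graph :: "nat set \<Rightarrow> nat set set \<Rightarrow> bool" where
  "simple_graph V E \<longleftrightarrow> finite V \<and>
     (\<forall>e\<in>E. \<exists>a b. a \<noteq> b \<and> a \<in> V \<and> b \<in> V \<and> e = {a, b})"

definition degree :: "nat set set \<Rightarrow> nat \<Rightarrow> nat" where
  "degree E v = card {e \<in> E. v \<in> e}"

definition max_degree :: "nat set \<Rightarrow> nat set set \<Rightarrow> nat" where
  "max_degree V E = Max (degree E ` V)"

definition other_end :: "nat set \<Rightarrow> nat \<Rightarrow> nat" where
  "other_end e v = (THE w. w \<in> e \<and> w \<noteq> v)"

definition lift :: "real \<times> real \<Rightarrow> point3" where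
  "lift q = (fst q, snd q, 0)"

definition ez :: point3 where "ez = (0, 0, 1)"

text \<open>The circular arc (a segment if alpha = 0) from P to Q (points of the base plane,
  P \<noteq> Q) lying in the vertical plane through P and Q, in the half-space z \<ge> 0,
  making the angle alpha with the segment PQ at both endpoints.
  For 0 < alpha \<le> pi/2 this is the arc of the circle with centre m - (L/2) cot(alpha) ez and
  radius L/(2 sin alpha); it is the unique such circular arc.\<close>
definition arc_path :: "point3 \<Rightarrow> point3 \<Rightarrow> real \<Rightarrow> real \<Rightarrow> point3" where
  "arc_path P Q \<alpha> t =
     (let s = 1 - 2 * t; m = (1/2) *\<^sub>R (P + Q); L = norm (Q - P); u = (1 / L) *\<^sub>R (Q - P) in
      if \<alpha> = 0 then m - (L/2 * s) *\<^sub>R u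
      else m - (L/2 * sin (\<alpha> * s) / sin \<alpha>) *\<^sub>R u
             + (L/2 * (cos (\<alpha> * s) - cos \<alpha>) / sin \<alpha>) *\<^sub>R ez)"

definition vec_angle :: "point3 \<Rightarrow> point3 \<Rightarrow> real" where
  "vec_angle x y = arccos (inner x y / (norm x * norm y))"

definition arc_tangent :: "(nat \<Rightarrow> real \<times> real) \<Rightarrow> (nat set \<Rightarrow> real) \<Rightarrow> nat set \<Rightarrow> nat \<Rightarrow> point3" where
  "arc_tangent p \<alpha> e v =
     vector_derivative (arc_path (lift (p v)) (lift (p (other_end e v))) (\<alpha> e)) (at 0 within {0..1})"

text \<open>A 3D arc diagram drawing with base plane z=0 and vertex positions p is determined by
  choosing, for every edge e, the common endpoint angle alpha e \<in> [0, pi/2].\<close>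
definition arc_diagram :: "nat set set \<Rightarrow> (nat set \<Rightarrow> real) \<Rightarrow> bool" where
  "arc_diagram E \<alpha> \<longleftrightarrow> (\<forall>e\<in>E. 0 \<le> \<alpha> e \<and> \<alpha> e \<le> pi / 2)"

definition angular_resolution_ge ::
  "nat set \<Rightarrow> nat set set \<Rightarrow> (nat \<Rightarrow> real \<times> real) \<Rightarrow> (nat set \<Rightarrow> real) \<Rightarrow> real \<Rightarrow> bool" where
  "angular_resolution_ge V E p \<alpha> r \<longleftrightarrow>
     (\<forall>v\<in>V. \<forall>e1\<in>E. \<forall>e2\<in>E. v \<in> e1 \<and> v \<in> e2 \<and> e1 \<noteq> e2 \<longrightarrow>
        vec_angle (arc_tangent p \<alpha> e1 v) (arc_tangent p \<alpha> e2 v) \<ge> r)"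

end

theory Submission
  imports Defs
begin

lemma tangent:
  assumes "P \<noteq> Q" "0 \<le> a" "a \<le> pi/2"
  shows "\<exists>r>0. vector_derivative (arc_path P Q a) (at 0 within {0..1}) =
     r *\<^sub>R (cos a *\<^sub>R ((1/norm(Q-P)) *\<^sub>R (Q-P)) + sin a *\<^sub>R ez)"
proof -
  define L where "L = norm (Q - P)"
  define u where "u = (1/L) *\<^sub>R (Q-P)"
  define m where "m = (1/2::real) *\<^sub>R (P + Q)"
  have L: "L > 0" using assms(1) by (simp add: L_def)
  show ?thesis
  proof (cases "a = 0")
    case True
    have f: "arc_path P Q a = (\<lambda>t. m - (L/2 * (1 - 2*t)) *\<^sub>R u)"
      by (rule ext) (simp add: arc_path_def True L_def u_def m_def Let_def)
    have "((\<lambda>t. m - (L/2 * (1 - 2*t)) *\<^sub>R u) has_vector_derivative L *\<^sub>R u) (at 0)"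
      by (auto intro!: derivative_eq_intros)
    then have "vector_derivative (arc_path P Q a) (at 0 within {0..1}) = L *\<^sub>R u"
      unfolding f by (rule vector_derivative_at_within_ivl) auto
    then show ?thesis using L True by (intro exI[of _ L]) (simp add: u_def L_def)
  next
    case False
    have sa: "sin a > 0" using assms False by (intro sin_gt_zero) auto
    have f: "arc_path P Q a = (\<lambda>t. m - (L/2 * sin (a * (1 - 2*t)) / sin a) *\<^sub>R u
             + (L/2 * (cos (a * (1 - 2*t)) - cos a) / sin a) *\<^sub>R ez)"
      by (rule ext) (simp add: arc_path_def False L_def u_def m_def Let_def)
    have "((\<lambda>t. m - (L/2 * sin (a * (1 - 2*t)) / sin a) *\<^sub>R u
             + (L/2 * (cos (a * (1 - 2*t)) - cos a) / sin a) *\<^sub>R ez) has_vector_derivative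
          (L*a/sin a) *\<^sub>R (cos a *\<^sub>R u + sin a *\<^sub>R ez)) (at 0)"
      using sa by (auto intro!: derivative_eq_intros simp: algebra_simps)
    then have "vector_derivative (arc_path P Q a) (at 0 within {0..1}) = (L*a/sin a) *\<^sub>R (cos a *\<^sub>R u + sin a *\<^sub>R ez)"
      unfolding f by (rule vector_derivative_at_within_ivl) auto
    moreover have "L*a/sin a > 0" using L sa assms False by simp
    ultimately show ?thesis by (intro exI[of _ "L*a/sin a"]) (simp add: u_def L_def)
  qed
qed

lemma angle_bound:
  fixes u1 u2 :: point3
  assumes "inner u1 ez = 0" "inner u2 ez = 0" "norm u1 = 1" "norm u2 = 1"
    "0 \<le> a" "a \<le> pi/2" "0 \<le> b" "b \<le> pi/2" "r1 > 0" "r2 > 0"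
  shows "vec_angle (r1 *\<^sub>R (cos a *\<^sub>R u1 + sin a *\<^sub>R ez)) (r2 *\<^sub>R (cos b *\<^sub>R u2 + sin b *\<^sub>R ez)) \<ge> \<bar>a - b\<bar>"
proof -
  define w1 where "w1 = cos a *\<^sub>R u1 + sin a *\<^sub>R ez"
  define w2 where "w2 = cos b *\<^sub>R u2 + sin b *\<^sub>R ez"
  have ee: "inner ez ez = 1" by (simp add: ez_def)
  have uu1: "inner u1 u1 = 1" using assms(3) by (simp add: dot_square_norm)
  have uu2: "inner u2 u2 = 1" using assms(4) by (simp add: dot_square_norm)
  have "inner w1 w1 = 1"
    unfolding w1_def using assms(1) ee uu1
    by (simp add: inner_add_left inner_add_right inner_commute)
  then have n1: "norm w1 = 1" by (metis norm_eq_sqrt_inner real_sqrt_one)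
  have "inner w2 w2 = 1"
    unfolding w2_def using assms(2) ee uu2
    by (simp add: inner_add_left inner_add_right inner_commute)
  then have n2: "norm w2 = 1" by (metis norm_eq_sqrt_inner real_sqrt_one)
  have i12: "inner w1 w2 = cos a * cos b * inner u1 u2 + sin a * sin b"
    unfolding w1_def w2_def using assms(1,2) ee
    by (simp add: inner_add_left inner_add_right inner_commute)
  have "inner u1 u2 \<le> 1" using norm_cauchy_schwarz[of u1 u2] assms(3,4) by simp
  moreover have "cos a \<ge> 0" "cos b \<ge> 0" using assms by (auto intro!: cos_ge_zero)
  ultimately have "cos a * cos b * inner u1 u2 \<le> cos a * cos b"
    by (simp add: mult_left_le)
  then have le: "inner w1 w2 \<le> cos (\<bar>a - b\<bar>)" using i12 by (simp add: cos_diff)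
  have ge: "inner w1 w2 \<ge> -1" using Cauchy_Schwarz_ineq2[of w1 w2] n1 n2 by simp
  have "vec_angle (r1 *\<^sub>R w1) (r2 *\<^sub>R w2) = arccos (inner w1 w2)"
    unfolding vec_angle_def using n1 n2 assms(9,10) by simp
  also have "\<dots> \<ge> arccos (cos \<bar>a - b\<bar>)"
    by (rule arccos_le_arccos[OF ge le]) simp
  also have "arccos (cos \<bar>a - b\<bar>) = \<bar>a - b\<bar>"
    using assms by (intro arccos_cos) auto
  finally show ?thesis unfolding w1_def w2_def .
qed

lemma edge_colouring:
  fixes E :: "nat set set"
  assumes "finite E" "\<forall>e\<in>E. \<exists>a b. e = {a, b}" "\<forall>v. card {e\<in>E. v \<in> e} \<le> d"
  shows "\<exists>col. (\<forall>e\<in>E. col e < 2*d) \<and>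
           (\<forall>e1\<in>E. \<forall>e2\<in>E. e1 \<noteq> e2 \<and> e1 \<inter> e2 \<noteq> {} \<longrightarrow> col e1 \<noteq> col e2)"
  using assms
proof (induction E rule: finite_induct)
  case empty
  then show ?case by auto
next
  case (insert e F)
  have degF: "\<forall>v. card {f\<in>F. v \<in> f} \<le> d"
  proof
    fix v
    have "card {f\<in>F. v \<in> f} \<le> card {f\<in>insert e F. v \<in> f}"
      using insert.hyps(1) by (intro card_mono) auto
    then show "card {f\<in>F. v \<in> f} \<le> d" using insert.prems(2) by (meson order_trans)
  qed
  obtain col where col: "\<forall>e\<in>F. col e < 2*d"
    "\<forall>e1\<in>F. \<forall>e2\<in>F. e1 \<noteq> e2 \<and> e1 \<inter> e2 \<noteq> {} \<longrightarrow> col e1 \<noteq> col e2"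
    using insert.IH insert.prems degF by auto
  obtain a b where ab: "e = {a, b}" using insert.prems(1) by auto
  have cnt: "card {f\<in>F. x \<in> f} + 1 \<le> d" if "x \<in> e" for x
  proof -
    have "{f\<in>insert e F. x \<in> f} = insert e {f\<in>F. x \<in> f}" using that by auto
    moreover have "card (insert e {f\<in>F. x \<in> f}) = card {f\<in>F. x \<in> f} + 1"
      using insert.hyps by simp
    ultimately show ?thesis using insert.prems(2) by metis
  qed
  define N where "N = {f\<in>F. a \<in> f} \<union> {f\<in>F. b \<in> f}"
  have fin: "finite {f\<in>F. a \<in> f}" "finite {f\<in>F. b \<in> f}" using insert.hyps by auto
  have "card N \<le> card {f\<in>F. a \<in> f} + card {f\<in>F. b \<in> f}"
    unfolding N_def by (rule card_Un_le)
  also have "\<dots> + 2 \<le> 2*d" using cnt[of a] cnt[of b] ab by auto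
  finally have cN: "card N + 2 \<le> 2 * d" by simp
  have "card (col ` N) \<le> card N" using fin unfolding N_def by (intro card_image_le) auto
  then have "card (col ` N) < card {0..<2*d}" using cN by simp
  then have "\<not> {0..<2*d} \<subseteq> col ` N"
    using fin unfolding N_def by (meson card_mono finite_Un finite_imageI not_le)
  then obtain c where c: "c < 2*d" "c \<notin> col ` N" by (meson atLeastLessThan_iff subsetI)
  define col' where "col' = col(e := c)"
  have N: "f \<in> N" if "f \<in> F" "f \<inter> e \<noteq> {}" for f using that ab unfolding N_def by auto
  show ?case
  proof (intro exI[of _ col'] conjI ballI impI)
    fix f assume "f \<in> insert e F" then show "col' f < 2 * d" using col c by (auto simp: col'_def)
  next
    fix e1 e2 assume h: "e1 \<in> insert e F" "e2 \<in> insert e F" "e1 \<noteq> e2 \<and> e1 \<inter> e2 \<noteq> {}"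
    show "col' e1 \<noteq> col' e2"
    proof (cases "e1 = e")
      case True
      then have "e2 \<in> F" "e2 \<noteq> e" using h by auto
      then show ?thesis using True h N[of e2] c insert.hyps(2) by (auto simp: col'_def)
    next
      case False
      note F1 = False
      show ?thesis
      proof (cases "e2 = e")
        case True
        then have "e1 \<in> F" using h F1 by auto
        then show ?thesis using True F1 h N[of e1] c by (auto simp: col'_def)
      next
        case False
        then show ?thesis using F1 h col(2) by (auto simp: col'_def)
      qed
    qed
  qed
qed

lemma other_end_eq: "a \<noteq> b \<Longrightarrow> other_end {a, b} a = b"
  unfolding other_end_def by (rule the_equality) auto

theorem theorem2:
  shows "\<exists>c>0. \<forall>(V :: nat set) (E :: nat set set) (p :: nat \<Rightarrow> real \<times> real).
     simple_graph V E \<and> max_degree V E \<ge> 1 \<and> inj_on p V \<longrightarrow>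
     (\<exists>\<alpha>. arc_diagram E \<alpha> \<and> angular_resolution_ge V E p \<alpha> (c / real (max_degree V E)))"
proof (intro exI[of _ "pi/4"] conjI allI impI)
  show "pi/4 > 0" by simp
  fix V :: "nat set" and E :: "nat set set" and p :: "nat \<Rightarrow> real \<times> real"
  assume H: "simple_graph V E \<and> max_degree V E \<ge> 1 \<and> inj_on p V"
  define d where "d = max_degree V E"
  have d1: "d \<ge> 1" using H d_def by simp
  have finV: "finite V" and edges: "\<forall>e\<in>E. \<exists>a b. a \<noteq> b \<and> a \<in> V \<and> b \<in> V \<and> e = {a, b}"
    using H by (auto simp: simple_graph_def)
  have "E \<subseteq> Pow V" using edges by auto
  then have finE: "finite E" using finV by (meson finite_Pow_iff finite_subset)
  have deg: "card {e\<in>E. v \<in> e} \<le> d" for v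
  proof (cases "v \<in> V")
    case True
    then show ?thesis unfolding d_def max_degree_def degree_def
      using finV by (intro Max_ge) auto
  next
    case False
    then have emp: "{e\<in>E. v \<in> e} = {}" using edges by auto
    show ?thesis unfolding emp by simp
  qed
  have "\<forall>e\<in>E. \<exists>a b. e = {a, b}" using edges by blast
  from edge_colouring[OF finE this allI[OF deg]] obtain col where col: "\<forall>e\<in>E. col e < 2*d"
    "\<forall>e1\<in>E. \<forall>e2\<in>E. e1 \<noteq> e2 \<and> e1 \<inter> e2 \<noteq> {} \<longrightarrow> col e1 \<noteq> col e2"
    by auto
  define \<alpha> where "\<alpha> e = real (col e) * pi / (4 * real d)" for e
  have arange: "0 \<le> \<alpha> e \<and> \<alpha> e \<le> pi/2" if "e \<in> E" for e
  proof -
    have "col e < 2 * d" using col(1) that by blast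
    then have "real (col e) \<le> 2 * d" by linarith
    then have "real (col e) * pi \<le> (2 * real d) * pi" by (intro mult_right_mono) auto
    then have "real (col e) * pi / (4 * real d) \<le> (2 * real d) * pi / (4 * real d)"
      by (intro divide_right_mono) auto
    also have "(2 * real d) * pi / (4 * real d) = pi / 2" using d1 by simp
    finally have "\<alpha> e \<le> pi / 2" unfolding \<alpha>_def .
    moreover have "0 \<le> \<alpha> e" unfolding \<alpha>_def by simp
    ultimately show ?thesis by simp
  qed
  have tan: "\<exists>r>0. \<exists>u. inner u ez = 0 \<and> norm u = 1 \<and>
      arc_tangent p \<alpha> e v = r *\<^sub>R (cos (\<alpha> e) *\<^sub>R u + sin (\<alpha> e) *\<^sub>R ez)"
    if tv: "v \<in> V" "e \<in> E" "v \<in> e" for v e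
  proof -
    have "\<exists>a b. a \<noteq> b \<and> a \<in> V \<and> b \<in> V \<and> e = {a, b}" using edges tv(2) by (rule bspec)
    then obtain a b where ab: "a \<noteq> b" "a \<in> V" "b \<in> V" "e = {a, b}" by auto
    obtain w where w: "w \<noteq> v" "w \<in> V" "e = {v, w}"
    proof (cases "v = a")
      case True then show ?thesis using that(1)[of b] ab by simp
    next
      case False then have "v = b" using ab \<open>v \<in> e\<close> by simp
      then show ?thesis using that(1)[of a] ab by (simp add: insert_commute)
    qed
    have oe: "other_end e v = w" using w other_end_eq by metis
    have "inj_on p V" using H by simp
    then have "p v \<noteq> p w" using w tv(1) by (metis inj_onD)
    then have PQ: "lift (p v) \<noteq> lift (p w)" by (auto simp: lift_def prod_eq_iff)
    obtain r where r: "r > 0" "vector_derivative (arc_path (lift (p v)) (lift (p w)) (\<alpha> e)) (at 0 within {0..1}) =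
      r *\<^sub>R (cos (\<alpha> e) *\<^sub>R ((1/norm(lift (p w) - lift (p v))) *\<^sub>R (lift (p w) - lift (p v))) + sin (\<alpha> e) *\<^sub>R ez)"
      using tangent[OF PQ] arange[OF tv(2)] by blast
    define u where "u = (1/norm(lift (p w) - lift (p v))) *\<^sub>R (lift (p w) - lift (p v))"
    have "inner u ez = 0" by (simp add: u_def lift_def ez_def)
    moreover have "norm u = 1" using PQ by (simp add: u_def)
    ultimately show ?thesis using r oe unfolding arc_tangent_def u_def by blast
  qed
  show "\<exists>\<alpha>. arc_diagram E \<alpha> \<and> angular_resolution_ge V E p \<alpha> (pi / 4 / real (max_degree V E))"
  proof (intro exI[of _ \<alpha>] conjI)
    show "arc_diagram E \<alpha>" using arange by (simp add: arc_diagram_def)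
    show "angular_resolution_ge V E p \<alpha> (pi / 4 / real (max_degree V E))"
      unfolding angular_resolution_ge_def
    proof (intro ballI impI)
      fix v e1 e2 assume h: "v \<in> V" "e1 \<in> E" "e2 \<in> E" "v \<in> e1 \<and> v \<in> e2 \<and> e1 \<noteq> e2"
      obtain r1 u1 where t1: "r1 > 0" "inner u1 ez = 0" "norm u1 = 1"
        "arc_tangent p \<alpha> e1 v = r1 *\<^sub>R (cos (\<alpha> e1) *\<^sub>R u1 + sin (\<alpha> e1) *\<^sub>R ez)"
        using tan[of v e1] h by blast
      obtain r2 u2 where t2: "r2 > 0" "inner u2 ez = 0" "norm u2 = 1"
        "arc_tangent p \<alpha> e2 v = r2 *\<^sub>R (cos (\<alpha> e2) *\<^sub>R u2 + sin (\<alpha> e2) *\<^sub>R ez)"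
        using tan[of v e2] h by blast
      have "e1 \<inter> e2 \<noteq> {}" using h by blast
      then have ne: "col e1 \<noteq> col e2" using col(2) h(2,3) h(4) by blast
      have "col e1 + 1 \<le> col e2 \<or> col e2 + 1 \<le> col e1" using ne by linarith
      then have "real (col e1) + 1 \<le> real (col e2) \<or> real (col e2) + 1 \<le> real (col e1)"
        by (metis of_nat_1 of_nat_add of_nat_le_iff)
      then have "1 \<le> \<bar>real (col e1) - real (col e2)\<bar>" by linarith
      then have "1 * (pi / (4 * real d)) \<le> \<bar>real (col e1) - real (col e2)\<bar> * (pi / (4 * real d))"
        by (intro mult_right_mono) auto
      also have "\<dots> = \<bar>\<alpha> e1 - \<alpha> e2\<bar>"
      proof -
        have "\<alpha> e1 - \<alpha> e2 = (real (col e1) - real (col e2)) * (pi / (4 * real d))"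
          unfolding \<alpha>_def by (simp add: left_diff_distrib diff_divide_distrib)
        moreover have "pi / (4 * real d) > 0" using d1 by simp
        ultimately show ?thesis by (simp add: abs_mult)
      qed
      also have "\<dots> \<le> vec_angle (arc_tangent p \<alpha> e1 v) (arc_tangent p \<alpha> e2 v)"
        unfolding t1(4) t2(4) using t1 t2 arange h by (intro angle_bound) auto
      finally show "pi / 4 / real (max_degree V E) \<le> vec_angle (arc_tangent p \<alpha> e1 v) (arc_tangent p \<alpha> e2 v)"
        by (simp add: d_def)
    qed
  qed
qed
end
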